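(* Let $f:\mathbb{R}^n\to\mathbb{R}$ be locally Lipschitz continuous and bounded below, let $x^0\in\mathbb{R}^n$ be such that the level set $\mathrm{lev}_{x^0}f=\{x\in\mathbb{R}^n : f(x)\le f(x^0)\}$ is bounded, and suppose $f$ is prox-regular at every point of $\mathrm{lev}_{x^0}f$. For $x\in\mathbb{R}^n$ and $a\ge 0$ let $g(y;x,a)=f(y)+\frac{a}{2}\|y-x\|_2^2$. Then there exists a number $\bar a\ge 0$ such that for every $a\ge \bar a$, every $x\in\mathbb{R}^n$ and every $y\in\mathrm{lev}_{x^0}f$, the function $g(\cdot;x,a)$ is convex on a neighborhood of $y$.
   Context: $\partial f(\bar x)$ denotes the basic (limiting) subdifferential: the set of limits of Fréchet subgradients $s_j\in\hat\partial f(x_j)$ with $x_j\to\bar x$, $f(x_j)\to f(\bar x)$, where $s\in\hat\partial f(x)$ means $\liminf_{x'\to x, x'\neq x}\frac{f(x')-f(x)-\langle s,x'-x\rangle}{\|x'-x\|}\ge 0$. A function $f$ is prox-regular at $\bar x$ for $\bar v\in\partial f(\bar x)$ if $f$ is finite and locally lower semicontinuous at $\bar x$ and there exist $\epsilon>0$ and $a\ge0$ such that $f(x')\ge f(x)+\langle v,x'-x\rangle-\frac a2\|x'-x\|^2$ for all $x'\in B(\bar x,\epsilon)$ whenever $\|x-\bar x\|<\epsilon$, $v\in\partial f(x)$, $\|v-\bar v\|<\epsilon$, $f(x)<f(\bar x)+\epsilon$; $f$ is prox-regular at $\bar x$ if this holds for every $\bar v\in\partial f(\bar x)$. *)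

theory Defs
  imports "HOL-Analysis.Analysis"
begin

text \<open>Frechet (regular) subgradient: liminf_{x' -> x, x' ~= x}
  (f x' - f x - <s, x' - x>) / |x' - x| >= 0, written out in epsilon-delta form.\<close>
definition frechet_subdiff :: "('a::euclidean_space \<Rightarrow> real) \<Rightarrow> 'a \<Rightarrow> 'a set" where
  "frechet_subdiff f x = {s. \<forall>\<epsilon>>0. \<exists>\<delta>>0. \<forall>x'. 0 < norm (x' - x) \<and> norm (x' - x) < \<delta> \<longrightarrow>
      (f x' - f x - inner s (x' - x)) / norm (x' - x) \<ge> - \<epsilon>}"

definition limiting_subdiff :: "('a::euclidean_space \<Rightarrow> real) \<Rightarrow> 'a \<Rightarrow> 'a set" where
  "limiting_subdiff f x = {v. \<exists>xs ss. (\<forall>j. ss j \<in> frechet_subdiff f (xs j)) \<and>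
      xs \<longlonglongrightarrow> x \<and> (\<lambda>j. f (xs j)) \<longlonglongrightarrow> f x \<and> ss \<longlonglongrightarrow> v}"

definition locally_lsc_at :: "('a::euclidean_space \<Rightarrow> real) \<Rightarrow> 'a \<Rightarrow> bool" where
  "locally_lsc_at f x \<longleftrightarrow> (\<exists>\<epsilon>>0. \<forall>z\<in>ball x \<epsilon>. \<forall>e>0. \<forall>\<^sub>F y in at z. f z - e < f y)"

definition prox_regular_at_for :: "('a::euclidean_space \<Rightarrow> real) \<Rightarrow> 'a \<Rightarrow> 'a \<Rightarrow> bool" where
  "prox_regular_at_for f xb vb \<longleftrightarrow> vb \<in> limiting_subdiff f xb \<and> locally_lsc_at f xb \<and>
     (\<exists>\<epsilon>>0. \<exists>a\<ge>0. \<forall>x v x'. norm (x - xb) < \<epsilon> \<and> v \<in> limiting_subdiff f x \<and> norm (v - vb) < \<epsilon>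
        \<and> f x < f xb + \<epsilon> \<and> x' \<in> ball xb \<epsilon> \<longrightarrow>
        f x' \<ge> f x + inner v (x' - x) - a / 2 * (norm (x' - x))\<^sup>2)"

definition prox_regular_at :: "('a::euclidean_space \<Rightarrow> real) \<Rightarrow> 'a \<Rightarrow> bool" where
  "prox_regular_at f xb \<longleftrightarrow> locally_lsc_at f xb \<and>
     (\<forall>vb\<in>limiting_subdiff f xb. prox_regular_at_for f xb vb)"

definition locally_lipschitz :: "('a::metric_space \<Rightarrow> real) \<Rightarrow> bool" where
  "locally_lipschitz f \<longleftrightarrow> (\<forall>x. \<exists>e>0. \<exists>L. L-lipschitz_on (ball x e) f)"

end

theory Submission
  imports Defs
begin


lemma lim_by_inv:
  fixes X :: "nat \<Rightarrow> 'b::metric_space"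
  assumes "\<And>n. dist (X n) l < inverse (real (Suc n))"
  shows "X \<longlonglongrightarrow> l"
proof (rule metric_LIMSEQ_I)
  fix r :: real assume "0 < r"
  then obtain m where m: "m > 0" "inverse (real m) < r" using ex_inverse_of_nat_less by blast
  define N where "N = m - 1"
  have N: "inverse (real (Suc N)) < r" using m by (simp add: N_def)
  show "\<exists>no. \<forall>n\<ge>no. dist (X n) l < r"
  proof (intro exI allI impI)
    fix n assume "N \<le> n"
    hence "inverse (real (Suc n)) \<le> inverse (real (Suc N))"
      by (simp add: le_imp_inverse_le)
    thus "dist (X n) l < r" using assms[of n] N by linarith
  qed
qed

lemma limiting_D:
  assumes "v \<in> limiting_subdiff f x" "e > 0"
  shows "\<exists>x' s. s \<in> frechet_subdiff f x' \<and> dist x' x < e \<and> \<bar>f x' - f x\<bar> < e \<and> dist s v < e"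
proof -
  obtain xs ss where h: "\<forall>j. ss j \<in> frechet_subdiff f (xs j)" "xs \<longlonglongrightarrow> x"
     "(\<lambda>j. f (xs j)) \<longlonglongrightarrow> f x" "ss \<longlonglongrightarrow> v"
    using assms(1) unfolding limiting_subdiff_def by blast
  have "\<forall>\<^sub>F j in sequentially. dist (xs j) x < e" using h(2) assms(2) tendsto_iff by blast
  moreover have "\<forall>\<^sub>F j in sequentially. dist (f (xs j)) (f x) < e"
    by (rule tendsto_iff[THEN iffD1, OF h(3), rule_format, OF assms(2)])
  moreover have "\<forall>\<^sub>F j in sequentially. dist (ss j) v < e" using h(4) assms(2) tendsto_iff by blast
  ultimately have "\<forall>\<^sub>F j in sequentially. dist (xs j) x < e \<and> dist (f (xs j)) (f x) < e \<and> dist (ss j) v < e"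
    by (auto elim: eventually_elim2 intro: eventually_conj)
  then obtain j where "dist (xs j) x < e \<and> dist (f (xs j)) (f x) < e \<and> dist (ss j) v < e"
    using eventually_happens sequentially_bot by blast
  thus ?thesis using h(1) by (auto simp: dist_real_def)
qed

lemma limiting_I:
  assumes "\<And>e. e > 0 \<Longrightarrow> \<exists>x' s. s \<in> frechet_subdiff f x' \<and> dist x' x < e \<and> \<bar>f x' - f x\<bar> < e \<and> dist s v < e"
  shows "v \<in> limiting_subdiff f x"
proof -
  have h1: "\<forall>n. \<exists>x' s. s \<in> frechet_subdiff f x' \<and> dist x' x < inverse (real (Suc n))
     \<and> \<bar>f x' - f x\<bar> < inverse (real (Suc n)) \<and> dist s v < inverse (real (Suc n))"
    by (intro allI assms) simp
  obtain xs where h2: "\<forall>n. \<exists>s. s \<in> frechet_subdiff f (xs n) \<and> dist (xs n) x < inverse (real (Suc n))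
     \<and> \<bar>f (xs n) - f x\<bar> < inverse (real (Suc n)) \<and> dist s v < inverse (real (Suc n))"
    using choice[OF h1] by (elim exE)
  obtain ss where h3: "\<forall>n. ss n \<in> frechet_subdiff f (xs n) \<and> dist (xs n) x < inverse (real (Suc n))
     \<and> \<bar>f (xs n) - f x\<bar> < inverse (real (Suc n)) \<and> dist (ss n) v < inverse (real (Suc n))"
    using choice[OF h2] by (elim exE)
  define p where "p n = (xs n, ss n)" for n
  have p: "\<And>n. snd (p n) \<in> frechet_subdiff f (fst (p n)) \<and> dist (fst (p n)) x < inverse (real (Suc n))
     \<and> \<bar>f (fst (p n)) - f x\<bar> < inverse (real (Suc n)) \<and> dist (snd (p n)) v < inverse (real (Suc n))"
    using h3 by (simp add: p_def)
  have "(\<lambda>n. fst (p n)) \<longlonglongrightarrow> x" by (rule lim_by_inv) (use p in blast)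
  moreover have "(\<lambda>n. snd (p n)) \<longlonglongrightarrow> v" by (rule lim_by_inv) (use p in blast)
  moreover have "(\<lambda>n. f (fst (p n))) \<longlonglongrightarrow> f x" by (rule lim_by_inv) (use p in \<open>auto simp: dist_real_def\<close>)
  ultimately have "\<exists>xs ss. (\<forall>j. ss j \<in> frechet_subdiff f (xs j)) \<and>
      xs \<longlonglongrightarrow> x \<and> (\<lambda>j. f (xs j)) \<longlonglongrightarrow> f x \<and> ss \<longlonglongrightarrow> v"
    using p by (intro exI[of _ "\<lambda>n. fst (p n)"] exI[of _ "\<lambda>n. snd (p n)"]) blast
  thus ?thesis unfolding limiting_subdiff_def by simp
qed

lemma frechet_bound:
  assumes "s \<in> frechet_subdiff f z" "L-lipschitz_on (ball z \<rho>) f" "\<rho> > 0"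
  shows "norm s \<le> L"
proof (rule ccontr)
  assume "\<not> norm s \<le> L"
  hence nL: "norm s > L" by simp
  have L0: "L \<ge> 0" using assms(2) lipschitz_on_nonneg by blast
  hence sn: "s \<noteq> 0" using nL by auto
  define \<epsilon> where "\<epsilon> = (norm s - L) / 2"
  have "\<epsilon> > 0" using nL by (simp add: \<epsilon>_def)
  then obtain \<delta> where d: "\<delta> > 0" "\<forall>x'. 0 < norm (x' - z) \<and> norm (x' - z) < \<delta> \<longrightarrow>
      (f x' - f z - inner s (x' - z)) / norm (x' - z) \<ge> - \<epsilon>"
    using assms(1) unfolding frechet_subdiff_def by blast
  define t where "t = min (\<delta>/2) (\<rho>/2)"
  have t: "t > 0" "t < \<delta>" "t < \<rho>" using d assms(3) by (auto simp: t_def)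
  define x' where "x' = z + t *\<^sub>R (s /\<^sub>R norm s)"
  have nx: "norm (x' - z) = t" using t sn by (simp add: x'_def)
  have ip: "inner s (x' - z) = t * norm s"
    using sn by (simp add: x'_def inner_commute power2_norm_eq_inner[symmetric] power2_eq_square)
  have "(f x' - f z - inner s (x' - z)) / t \<ge> - \<epsilon>" using d(2)[rule_format, of x'] nx t by auto
  hence "f x' - f z - t * norm s \<ge> - \<epsilon> * t" using t ip by (simp add: field_simps)
  moreover have "norm (f x' - f z) \<le> L * norm (x' - z)"
    by (rule lipschitz_on_normD[OF assms(2)]) (use nx t in \<open>auto simp: dist_norm norm_minus_commute\<close>)
  ultimately have "t * norm s - \<epsilon> * t \<le> L * t" using nx by (simp add: abs_le_iff)
  hence "norm s * t \<le> (L + \<epsilon>) * t" by (simp add: algebra_simps)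
  hence "norm s \<le> L + \<epsilon>" using t(1) by (metis mult_right_le_imp_le)
  hence "norm s - \<epsilon> \<le> L" by simp
  thus False using nL unfolding \<epsilon>_def by (simp add: field_simps)
qed

lemma support_convex:
  fixes h :: "'a::real_inner \<Rightarrow> real"
  assumes "convex S" "\<And>z. z \<in> S \<Longrightarrow> \<exists>w. \<forall>x\<in>S. h x \<ge> h z + inner w (x - z)"
  shows "convex_on S h"
  unfolding convex_on_def
proof (intro conjI assms(1) ballI allI impI)
  fix x y u v assume xy: "x \<in> S" "y \<in> S" and uv: "(0::real) \<le> u" "0 \<le> v" "u + v = 1"
  define z where "z = u *\<^sub>R x + v *\<^sub>R y"
  have "z \<in> S" using assms(1) xy uv by (simp add: z_def convex_def)
  then obtain w where w: "\<forall>x\<in>S. h x \<ge> h z + inner w (x - z)" using assms(2) by blast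
  have "u * h x \<ge> u * (h z + inner w (x - z))" using w xy uv mult_left_mono by blast
  moreover have "v * h y \<ge> v * (h z + inner w (y - z))" using w xy uv mult_left_mono by blast
  moreover have "u * inner w (x - z) + v * inner w (y - z) = 0"
  proof -
    have "u * inner w (x - z) + v * inner w (y - z) = inner w (u *\<^sub>R x + v *\<^sub>R y) - (u + v) * inner w z"
      by (simp add: inner_diff_right inner_add_right algebra_simps)
    thus ?thesis using uv by (simp add: z_def)
  qed
  moreover have "h z = u * h z + v * h z" using uv by (metis distrib_right mult_1)
  ultimately show "h (u *\<^sub>R x + v *\<^sub>R y) \<le> u * h x + v * h y"
    using uv by (simp add: z_def[symmetric] algebra_simps)
qed

lemma prox_point:
  fixes f :: "'a::euclidean_space \<Rightarrow> real"
  assumes lip: "L-lipschitz_on (ball x r) f" and r: "r > 0" and k: "k > 0" and kr: "2 * L < k * r"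
  shows "\<exists>z s. s \<in> frechet_subdiff f z \<and> norm (z - x) \<le> L / k \<and> norm s \<le> 2 * L"
proof -
  define C where "C = cball x (r/2)"
  have CB: "C \<subseteq> ball x r" using r by (auto simp: C_def)
  have cf: "continuous_on (ball x r) f" using lip by (rule lipschitz_on_continuous_on)
  have "continuous_on C (\<lambda>z. f z + k * (norm (z - x))\<^sup>2)"
    by (intro continuous_intros continuous_on_subset[OF cf CB])
  moreover have "compact C" "C \<noteq> {}" using r by (auto simp: C_def)
  ultimately obtain z where zC: "z \<in> C" and zmin: "\<forall>y\<in>C. f z + k * (norm (z - x))\<^sup>2 \<le> f y + k * (norm (y - x))\<^sup>2"
    using continuous_attains_inf by blast
  have xC: "x \<in> C" using r by (simp add: C_def)
  have L0: "L \<ge> 0" using lip lipschitz_on_nonneg by blast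
  have "f z + k * (norm (z - x))\<^sup>2 \<le> f x" using zmin[rule_format, OF xC] by simp
  moreover have "norm (f x - f z) \<le> L * norm (x - z)"
    by (rule lipschitz_on_normD[OF lip]) (use zC xC CB in auto)
  ultimately have "k * (norm (z - x))\<^sup>2 \<le> L * norm (z - x)"
    by (simp add: norm_minus_commute abs_le_iff)
  hence zx: "norm (z - x) \<le> L / k"
  proof (cases "norm (z - x) = 0")
    case True thus ?thesis using L0 k by simp
  next
    case False
    hence "(k * norm (z - x)) * norm (z - x) \<le> L * norm (z - x)"
      using \<open>k * (norm (z - x))\<^sup>2 \<le> L * norm (z - x)\<close> by (simp add: power2_eq_square mult.assoc)
    hence "k * norm (z - x) \<le> L" using False by (metis mult_right_le_imp_le norm_ge_zero order_le_less)
    thus ?thesis using k by (simp add: field_simps)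
  qed
  have Lk: "L / k < r / 2" using kr k by (simp add: field_simps)
  define s where "s = - (2 * k) *\<^sub>R (z - x)"
  have "s \<in> frechet_subdiff f z"
    unfolding frechet_subdiff_def
  proof (intro CollectI allI impI)
    fix \<epsilon> :: real assume e: "\<epsilon> > 0"
    define \<delta> where "\<delta> = min (\<epsilon> / k) (r/2 - norm (z - x))"
    have "norm (z - x) < r / 2" using zx Lk by linarith
    hence d: "\<delta> > 0" using e k by (simp add: \<delta>_def)
    show "\<exists>\<delta>>0. \<forall>x'. 0 < norm (x' - z) \<and> norm (x' - z) < \<delta> \<longrightarrow>
      - \<epsilon> \<le> (f x' - f z - inner s (x' - z)) / norm (x' - z)"
    proof (intro exI[of _ \<delta>] conjI d allI impI)
      fix x' assume x': "0 < norm (x' - z) \<and> norm (x' - z) < \<delta>"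
      have "norm (x' - x) \<le> norm (x' - z) + norm (z - x)"
        using norm_triangle_ineq[of "x' - z" "z - x"] by simp
      hence "x' \<in> C" using x' by (simp add: C_def \<delta>_def dist_norm norm_minus_commute)
      hence m: "f z + k * (norm (z - x))\<^sup>2 \<le> f x' + k * (norm (x' - x))\<^sup>2" using zmin by blast
      have id: "(norm (x' - x))\<^sup>2 = (norm (z - x))\<^sup>2 + 2 * inner (z - x) (x' - z) + (norm (x' - z))\<^sup>2"
      proof -
        have "x' - x = (z - x) + (x' - z)" by simp
        hence "(norm (x' - x))\<^sup>2 = (norm ((z - x) + (x' - z)))\<^sup>2" by (simp only:)
        also have "\<dots> = (norm (z - x))\<^sup>2 + 2 * inner (z - x) (x' - z) + (norm (x' - z))\<^sup>2"
          using dot_norm[of "z - x" "x' - z"] by simp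
        finally show ?thesis .
      qed
      have ips: "inner s (x' - z) = - 2 * k * inner (z - x) (x' - z)" by (simp add: s_def)
      define d' where "d' = norm (x' - z)"
      have "f x' - f z - inner s (x' - z) \<ge> - k * d'\<^sup>2"
        using m id ips unfolding d'_def by (simp add: algebra_simps)
      moreover have "k * d' \<le> \<epsilon>" using x' k unfolding d'_def \<delta>_def by (simp add: field_simps)
      moreover have "d' > 0" using x' d'_def by simp
      ultimately have "f x' - f z - inner s (x' - z) \<ge> - \<epsilon> * d'"
      proof -
        have "(k * d') * d' \<le> \<epsilon> * d'" using mult_right_mono[OF \<open>k * d' \<le> \<epsilon>\<close>, of d'] \<open>d' > 0\<close> by simp
        hence "k * d'\<^sup>2 \<le> \<epsilon> * d'" by (simp add: power2_eq_square mult.assoc)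
        thus ?thesis using \<open>f x' - f z - inner s (x' - z) \<ge> - k * d'\<^sup>2\<close> by linarith
      qed
      thus "- \<epsilon> \<le> (f x' - f z - inner s (x' - z)) / norm (x' - z)"
        using \<open>d' > 0\<close> unfolding d'_def by (simp add: field_simps)
    qed
  qed
  moreover have "norm s \<le> 2 * L"
  proof -
    have "norm s = 2 * k * norm (z - x)" using k by (simp add: s_def)
    also have "\<dots> \<le> 2 * k * (L / k)" using mult_left_mono[OF zx, of "2 * k"] k by simp
    also have "\<dots> = 2 * L" using k by simp
    finally show ?thesis .
  qed
  ultimately show ?thesis using zx by blast
qed

lemma limiting_nonempty:
  fixes f :: "'a::euclidean_space \<Rightarrow> real"
  assumes lip: "L-lipschitz_on (ball x r) f" and r: "r > 0"
  shows "\<exists>v. v \<in> limiting_subdiff f x"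
proof -
  have L0: "L \<ge> 0" using lip lipschitz_on_nonneg by blast
  define c where "c = 2 * (L + 1) / r"
  have c: "c > 0" using L0 r by (simp add: c_def)
  have ex: "\<forall>n. \<exists>z s. s \<in> frechet_subdiff f z \<and> norm (z - x) \<le> L / (c * real (Suc n)) \<and> norm s \<le> 2 * L"
  proof
    fix n
    have "2 * L < (c * real (Suc n)) * r"
    proof -
      have "c * r = 2 * (L + 1)" using r by (simp add: c_def)
      have "(c * real (Suc n)) * r = (c * r) * real (Suc n)" by (simp only: ac_simps)
      hence "(c * real (Suc n)) * r = 2 * (L + 1) * real (Suc n)" using \<open>c * r = 2 * (L + 1)\<close> by simp
      have "2 * L < 2 * (L + 1)" by simp
      also have "\<dots> \<le> 2 * (L + 1) * real (Suc n)" using L0 by simp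
      also have "\<dots> = (c * real (Suc n)) * r" using \<open>(c * real (Suc n)) * r = 2 * (L + 1) * real (Suc n)\<close> by simp
      finally show ?thesis .
    qed
    thus "\<exists>z s. s \<in> frechet_subdiff f z \<and> norm (z - x) \<le> L / (c * real (Suc n)) \<and> norm s \<le> 2 * L"
      using prox_point[OF lip r] c by simp
  qed
  obtain zs where ex2: "\<forall>n. \<exists>s. s \<in> frechet_subdiff f (zs n) \<and> norm (zs n - x) \<le> L / (c * real (Suc n)) \<and> norm s \<le> 2 * L"
    using choice[OF ex] by (elim exE)
  obtain ss where zs': "\<forall>n. ss n \<in> frechet_subdiff f (zs n) \<and> norm (zs n - x) \<le> L / (c * real (Suc n)) \<and> norm (ss n) \<le> 2 * L"
    using choice[OF ex2] by (elim exE)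
  have zs: "\<And>n. ss n \<in> frechet_subdiff f (zs n) \<and> norm (zs n - x) \<le> L / (c * real (Suc n)) \<and> norm (ss n) \<le> 2 * L"
    using zs' by blast
  have "(\<lambda>n. zs n - x) \<longlonglongrightarrow> 0"
  proof (rule Lim_null_comparison)
    show "\<forall>\<^sub>F n in sequentially. norm (zs n - x) \<le> (L / c) * inverse (real (Suc n))"
      using zs by (simp add: field_simps)
    show "(\<lambda>n. (L / c) * inverse (real (Suc n))) \<longlonglongrightarrow> 0"
      using tendsto_mult[OF tendsto_const LIMSEQ_inverse_real_of_nat, of "L / c"] by simp
  qed
  hence zx: "zs \<longlonglongrightarrow> x" using LIM_zero_cancel by blast
  have "\<forall>n. ss n \<in> cball 0 (2 * L)" using zs by simp
  then obtain l \<sigma> where "l \<in> cball 0 (2 * L)" and \<sigma>: "strict_mono \<sigma>" "(ss \<circ> \<sigma>) \<longlonglongrightarrow> l"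
    by (rule seq_compactE[OF compact_imp_seq_compact[OF compact_cball]])
  have z2: "(zs \<circ> \<sigma>) \<longlonglongrightarrow> x" using LIMSEQ_subseq_LIMSEQ[OF zx \<sigma>(1)] .
  have "isCont f x"
    using lipschitz_on_continuous_on[OF lip] continuous_on_eq_continuous_at[of "ball x r" f] r by auto
  hence "(\<lambda>n. f ((zs \<circ> \<sigma>) n)) \<longlonglongrightarrow> f x" using isCont_tendsto_compose[OF _ z2] by blast
  hence "l \<in> limiting_subdiff f x"
    unfolding limiting_subdiff_def using zs z2 \<sigma>(2)
    by (intro CollectI exI[of _ "zs \<circ> \<sigma>"] exI[of _ "ss \<circ> \<sigma>"]) auto
  thus ?thesis by blast
qed



lemma ll_isCont:
  assumes "locally_lipschitz f" shows "isCont f x"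
proof -
  obtain e L where "e > 0" "L-lipschitz_on (ball x e) f" using assms unfolding locally_lipschitz_def by blast
  hence "continuous_on (ball x e) f" by (intro lipschitz_on_continuous_on) 
  thus ?thesis using continuous_on_eq_continuous_at[OF open_ball] centre_in_ball \<open>e > 0\<close> by blast
qed

lemma limiting_bound:
  fixes f :: "'a::euclidean_space \<Rightarrow> real"
  assumes lip: "L-lipschitz_on (ball y r) f" and x: "x \<in> ball y r" and v: "v \<in> limiting_subdiff f x"
  shows "norm v \<le> L"
proof -
  obtain xs ss where h: "\<forall>j. ss j \<in> frechet_subdiff f (xs j)" "xs \<longlonglongrightarrow> x" "ss \<longlonglongrightarrow> v"
    using v unfolding limiting_subdiff_def by blast
  have "eventually (\<lambda>j. xs j \<in> ball y r) sequentially"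
    using topological_tendstoD[OF h(2) open_ball x] .
  then obtain M where M: "\<forall>j\<ge>M. xs j \<in> ball y r" by (auto simp: eventually_sequentially)
  have "\<forall>j\<ge>M. norm (ss j) \<le> L"
  proof (intro allI impI)
    fix j assume "M \<le> j"
    hence xj: "xs j \<in> ball y r" using M by blast
    define \<rho> where "\<rho> = r - dist y (xs j)"
    have rp: "\<rho> > 0" using xj by (simp add: \<rho>_def)
    have sub: "ball (xs j) \<rho> \<subseteq> ball y r"
    proof
      fix z assume "z \<in> ball (xs j) \<rho>"
      hence "dist (xs j) z < \<rho>" by simp
      moreover have "dist y z \<le> dist y (xs j) + dist (xs j) z" by (rule dist_triangle)
      ultimately show "z \<in> ball y r" unfolding \<rho>_def by simp
    qed
    have lip2: "L-lipschitz_on (ball (xs j) \<rho>) f" by (rule lipschitz_on_mono[OF lip sub order_refl])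
    show "norm (ss j) \<le> L" by (rule frechet_bound[OF h(1)[rule_format, of j] lip2 rp])
  qed
  thus ?thesis by (rule Lim_bounded[OF tendsto_norm[OF h(3)]])
qed

lemma limiting_closed:
  fixes f :: "'a::euclidean_space \<Rightarrow> real"
  shows "closed (limiting_subdiff f y)"
  unfolding closed_sequential_limits
proof (intro allI impI)
  fix vs l assume h: "(\<forall>n. vs n \<in> limiting_subdiff f y) \<and> vs \<longlonglongrightarrow> l"
  show "l \<in> limiting_subdiff f y"
  proof (rule limiting_I)
    fix e :: real assume e: "e > 0"
    have "\<forall>\<^sub>F n in sequentially. dist (vs n) l < e/2"
      using tendsto_iff[THEN iffD1, OF conjunct2[OF h], rule_format, of "e/2"] e by simp
    then obtain n where n: "dist (vs n) l < e/2" by (auto simp: eventually_sequentially)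
    have vn: "vs n \<in> limiting_subdiff f y" using h by blast
    obtain x' s where o: "s \<in> frechet_subdiff f x'" "dist x' y < e/2" "\<bar>f x' - f y\<bar> < e/2" "dist s (vs n) < e/2"
      using limiting_D[OF vn half_gt_zero[OF e]] by blast
    have "dist x' y < e" using o(2) e by linarith
    moreover have "\<bar>f x' - f y\<bar> < e" using o(3) e by linarith
    moreover have "dist s l < e" using o(4) n dist_triangle[of s l "vs n"] by linarith
    ultimately have "s \<in> frechet_subdiff f x' \<and> dist x' y < e \<and> \<bar>f x' - f y\<bar> < e \<and> dist s l < e"
      using o(1) by blast
    thus "\<exists>x' s. s \<in> frechet_subdiff f x' \<and> dist x' y < e \<and> \<bar>f x' - f y\<bar> < e \<and> dist s l < e"
      by blast
  qed
qed

lemma half_expand: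
  fixes P Q R S a :: real
  assumes "P = Q + 2 * R + S"
  shows "a / 2 * P = a / 2 * Q + a * R + a / 2 * S"
  using assms by (simp add: algebra_simps)

lemma conv_from_support:
  fixes f :: "'a::euclidean_space \<Rightarrow> real"
  assumes sup: "\<forall>x\<in>ball y \<delta>. \<exists>v. \<forall>x'\<in>ball y \<delta>. f x' \<ge> f x + inner v (x' - x) - A / 2 * (norm (x' - x))\<^sup>2"
    and a: "a \<ge> A"
  shows "convex_on (ball y \<delta>) (\<lambda>z. f z + a / 2 * (norm (z - c))\<^sup>2)"
proof (rule support_convex)
  fix x assume x: "x \<in> ball y \<delta>"
  then obtain v where v: "\<forall>x'\<in>ball y \<delta>. f x' \<ge> f x + inner v (x' - x) - A / 2 * (norm (x' - x))\<^sup>2"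
    using sup by blast
  show "\<exists>w. \<forall>x'\<in>ball y \<delta>. f x' + a / 2 * (norm (x' - c))\<^sup>2 \<ge> f x + a / 2 * (norm (x - c))\<^sup>2 + inner w (x' - x)"
  proof (intro exI[of _ "v + a *\<^sub>R (x - c)"] ballI)
    fix x' assume x': "x' \<in> ball y \<delta>"
    have id: "(norm (x' - c))\<^sup>2 = (norm (x - c))\<^sup>2 + 2 * inner (x - c) (x' - x) + (norm (x' - x))\<^sup>2"
    proof -
      have "x' - c = (x - c) + (x' - x)" by simp
      hence "(norm (x' - c))\<^sup>2 = (norm ((x - c) + (x' - x)))\<^sup>2" by (simp only:)
      also have "\<dots> = (norm (x - c))\<^sup>2 + 2 * inner (x - c) (x' - x) + (norm (x' - x))\<^sup>2"
        using dot_norm[of "x - c" "x' - x"] by simp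
      finally show ?thesis .
    qed
    have e1: "A / 2 * (norm (x' - x))\<^sup>2 \<le> a / 2 * (norm (x' - x))\<^sup>2"
      by (rule mult_right_mono) (use a in auto)
    have e2: "inner (v + a *\<^sub>R (x - c)) (x' - x) = inner v (x' - x) + a * inner (x - c) (x' - x)"
      by (simp only: inner_add_left inner_scaleR_left)
    have e3: "a / 2 * (norm (x' - c))\<^sup>2 = a / 2 * (norm (x - c))\<^sup>2 + a * inner (x - c) (x' - x) + a / 2 * (norm (x' - x))\<^sup>2"
      by (rule half_expand[OF id])
    have e4: "f x' \<ge> f x + inner v (x' - x) - A / 2 * (norm (x' - x))\<^sup>2" by (rule v[rule_format, OF x'])
    show "f x' + a / 2 * (norm (x' - c))\<^sup>2 \<ge> f x + a / 2 * (norm (x - c))\<^sup>2 + inner (v + a *\<^sub>R (x - c)) (x' - x)"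
      unfolding e2 e3 using e1 e4 by linarith
  qed
qed (rule convex_ball)



lemma local_conv:
  fixes f :: "'a::euclidean_space \<Rightarrow> real"
  assumes ll: "locally_lipschitz f" and pr: "prox_regular_at f y"
  shows "\<exists>\<delta>>0. \<exists>A\<ge>0. \<forall>x\<in>ball y \<delta>. \<exists>v. \<forall>x'\<in>ball y \<delta>. f x' \<ge> f x + inner v (x' - x) - A / 2 * (norm (x' - x))\<^sup>2"
proof -
  obtain r L where r: "r > 0" and lip: "L-lipschitz_on (ball y r) f"
    using ll unfolding locally_lipschitz_def by blast
  define K where "K = limiting_subdiff f y"
  define Q where "Q vb e aa \<longleftrightarrow> (\<forall>x v x'. norm (x - y) < e \<and> v \<in> limiting_subdiff f x \<and> norm (v - vb) < e
        \<and> f x < f y + e \<and> x' \<in> ball y e \<longrightarrow>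
        f x' \<ge> f x + inner v (x' - x) - aa / 2 * (norm (x' - x))\<^sup>2)" for vb e aa
  have Kpr: "\<forall>vb\<in>K. \<exists>e. e > 0 \<and> (\<exists>aa. aa \<ge> 0 \<and> Q vb e aa)"
    using pr unfolding prox_regular_at_def prox_regular_at_for_def K_def Q_def by blast
  obtain \<epsilon> where \<epsilon>: "\<forall>vb\<in>K. \<epsilon> vb > 0 \<and> (\<exists>aa. aa \<ge> 0 \<and> Q vb (\<epsilon> vb) aa)"
    using bchoice[OF Kpr] by (elim exE)
  have hA: "\<forall>vb\<in>K. \<exists>aa. aa \<ge> 0 \<and> Q vb (\<epsilon> vb) aa" using \<epsilon> by blast
  obtain a where a: "\<forall>vb\<in>K. a vb \<ge> 0 \<and> Q vb (\<epsilon> vb) (a vb)"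
    using bchoice[OF hA] by (elim exE)
  have yin: "y \<in> ball y r" using r by simp
  have Kb: "K \<subseteq> cball 0 L"
  proof
    fix v assume "v \<in> K"
    hence "norm v \<le> L" using limiting_bound[OF lip yin] unfolding K_def by blast
    thus "v \<in> cball 0 L" by simp
  qed
  have "compact K" unfolding compact_eq_bounded_closed
    using bounded_subset[OF bounded_cball Kb] limiting_closed unfolding K_def by blast
  moreover have "K \<subseteq> (\<Union>vb\<in>K. ball vb (\<epsilon> vb))" using \<epsilon> by auto
  ultimately obtain D where D: "D \<subseteq> K" "finite D" "K \<subseteq> (\<Union>vb\<in>D. ball vb (\<epsilon> vb))"
    using compactE_image[of K K "\<lambda>vb. ball vb (\<epsilon> vb)"] by blast
  define U where "U = (\<Union>vb\<in>D. ball vb (\<epsilon> vb))"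
  have oU: "open U" unfolding U_def by blast
  have contf: "\<And>z. isCont f z" using ll_isCont[OF ll] .
  have "\<exists>\<delta>0>0. \<forall>x\<in>ball y \<delta>0. \<forall>v\<in>limiting_subdiff f x. v \<in> U"
  proof (rule ccontr)
    assume "\<not> (\<exists>\<delta>0>0. \<forall>x\<in>ball y \<delta>0. \<forall>v\<in>limiting_subdiff f x. v \<in> U)"
    hence neg: "\<forall>\<delta>0>0. \<exists>x\<in>ball y \<delta>0. \<exists>v\<in>limiting_subdiff f x. v \<notin> U" by blast
    have ex: "\<forall>n. \<exists>x. x \<in> ball y (min r (inverse (real (Suc n)))) \<and> (\<exists>v. v \<in> limiting_subdiff f x \<and> v \<notin> U)"
    proof
      fix n
      have "min r (inverse (real (Suc n))) > 0" using r by simp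
      from neg[rule_format, OF this] show "\<exists>x. x \<in> ball y (min r (inverse (real (Suc n)))) \<and> (\<exists>v. v \<in> limiting_subdiff f x \<and> v \<notin> U)"
        by blast
    qed
    obtain xs where ex2: "\<forall>n. xs n \<in> ball y (min r (inverse (real (Suc n)))) \<and> (\<exists>v. v \<in> limiting_subdiff f (xs n) \<and> v \<notin> U)"
      using choice[OF ex] by (elim exE)
    have ex3: "\<forall>n. \<exists>v. v \<in> limiting_subdiff f (xs n) \<and> v \<notin> U" using ex2 by blast
    obtain vs where vs: "\<forall>n. vs n \<in> limiting_subdiff f (xs n) \<and> vs n \<notin> U"
      using choice[OF ex3] by (elim exE)
    have xr: "\<And>n. xs n \<in> ball y r" using ex2 by auto
    have xd: "\<And>n. dist (xs n) y < inverse (real (Suc n))" using ex2 by (auto simp: dist_commute)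
    have "\<forall>n. vs n \<in> cball 0 L"
    proof
      fix n show "vs n \<in> cball 0 L" using limiting_bound[OF lip xr] vs by auto
    qed
    then obtain l \<sigma> where "l \<in> cball 0 L" and \<sigma>: "strict_mono \<sigma>" "(vs \<circ> \<sigma>) \<longlonglongrightarrow> l"
      by (rule seq_compactE[OF compact_imp_seq_compact[OF compact_cball]])
    have xy: "xs \<longlonglongrightarrow> y" by (rule lim_by_inv) (rule xd)
    have x2: "(xs \<circ> \<sigma>) \<longlonglongrightarrow> y" by (rule LIMSEQ_subseq_LIMSEQ[OF xy \<sigma>(1)])
    have fx2: "(\<lambda>n. f ((xs \<circ> \<sigma>) n)) \<longlonglongrightarrow> f y" by (rule isCont_tendsto_compose[OF contf x2])
    have "l \<in> K" unfolding K_def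
    proof (rule limiting_I)
      fix e :: real assume e: "e > 0"
      have e2: "e / 2 > 0" using e by simp
      have ev1: "\<forall>\<^sub>F n in sequentially. dist ((xs \<circ> \<sigma>) n) y < e / 2"
        by (rule tendsto_iff[THEN iffD1, OF x2, rule_format, OF e2])
      have ev2: "\<forall>\<^sub>F n in sequentially. dist (f ((xs \<circ> \<sigma>) n)) (f y) < e / 2"
        by (rule tendsto_iff[THEN iffD1, OF fx2, rule_format, OF e2])
      have ev3: "\<forall>\<^sub>F n in sequentially. dist ((vs \<circ> \<sigma>) n) l < e / 2"
        by (rule tendsto_iff[THEN iffD1, OF \<sigma>(2), rule_format, OF e2])
      have "\<forall>\<^sub>F n in sequentially. dist ((xs \<circ> \<sigma>) n) y < e / 2 \<and> dist (f ((xs \<circ> \<sigma>) n)) (f y) < e / 2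
          \<and> dist ((vs \<circ> \<sigma>) n) l < e / 2"
        by (intro eventually_conj ev1 ev2 ev3)
      then obtain n where n: "dist ((xs \<circ> \<sigma>) n) y < e / 2" "dist (f ((xs \<circ> \<sigma>) n)) (f y) < e / 2"
          "dist ((vs \<circ> \<sigma>) n) l < e / 2"
        by (auto simp: eventually_sequentially)
      define m where "m = \<sigma> n"
      have n': "dist (xs m) y < e / 2" "dist (f (xs m)) (f y) < e / 2" "dist (vs m) l < e / 2"
        using n by (simp_all add: m_def)
      have vm: "vs m \<in> limiting_subdiff f (xs m)" using vs by blast
      obtain x' s where o: "s \<in> frechet_subdiff f x'" "dist x' (xs m) < e/2" "\<bar>f x' - f (xs m)\<bar> < e/2" "dist s (vs m) < e/2"
        using limiting_D[OF vm e2] by blast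
      have "dist x' y < e" using o(2) n'(1) dist_triangle[of x' y "xs m"] by linarith
      moreover have "\<bar>f x' - f y\<bar> < e" using o(3) n'(2) unfolding dist_real_def by linarith
      moreover have "dist s l < e" using o(4) n'(3) dist_triangle[of s l "vs m"] by linarith
      ultimately show "\<exists>x' s. s \<in> frechet_subdiff f x' \<and> dist x' y < e \<and> \<bar>f x' - f y\<bar> < e \<and> dist s l < e"
        using o(1) by blast
    qed
    hence "l \<in> U" using D(3) unfolding U_def by blast
    hence "\<forall>\<^sub>F n in sequentially. (vs \<circ> \<sigma>) n \<in> U" by (rule topological_tendstoD[OF \<sigma>(2) oU])
    then obtain n where "(vs \<circ> \<sigma>) n \<in> U" by (auto simp: eventually_sequentially)
    thus False using vs by simp
  qed
  then obtain \<delta>0 where \<delta>0: "\<delta>0 > 0" "\<forall>x\<in>ball y \<delta>0. \<forall>v\<in>limiting_subdiff f x. v \<in> U" by blast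
  define emin where "emin = Min (insert 1 (\<epsilon> ` D))"
  have fin: "finite (insert 1 (\<epsilon> ` D))" using D(2) by simp
  have emin: "emin > 0" unfolding emin_def using fin \<epsilon> D(1) by auto
  have emin_le: "\<And>vb. vb \<in> D \<Longrightarrow> emin \<le> \<epsilon> vb" unfolding emin_def using fin by auto
  obtain \<delta>1 where \<delta>1: "\<delta>1 > 0" "\<forall>x'. dist x' y < \<delta>1 \<longrightarrow> dist (f x') (f y) < emin"
    using contf[of y] emin unfolding continuous_at_eps_delta by blast
  define \<delta> where "\<delta> = min \<delta>0 (min \<delta>1 emin)"
  define A where "A = (\<Sum>vb\<in>D. a vb)"
  have A0: "A \<ge> 0" unfolding A_def using a D(1) by (intro sum_nonneg) auto
  have aA: "\<And>vb. vb \<in> D \<Longrightarrow> a vb \<le> A" unfolding A_def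
    using a D by (intro member_le_sum) auto
  have dpos: "\<delta> > 0" using \<delta>0 \<delta>1 emin by (simp add: \<delta>_def)
  have main: "\<forall>x\<in>ball y \<delta>. \<exists>v. \<forall>x'\<in>ball y \<delta>. f x' \<ge> f x + inner v (x' - x) - A / 2 * (norm (x' - x))\<^sup>2"
  proof
    fix x assume x: "x \<in> ball y \<delta>"
    obtain e' L' where "e' > 0" "L'-lipschitz_on (ball x e') f" using ll unfolding locally_lipschitz_def by blast
    then obtain v where v: "v \<in> limiting_subdiff f x" using limiting_nonempty by blast
    have "x \<in> ball y \<delta>0" using x by (simp add: \<delta>_def)
    hence "v \<in> U" using \<delta>0(2) v by blast
    then obtain vb where vb: "vb \<in> D" "v \<in> ball vb (\<epsilon> vb)" unfolding U_def by blast
    have Qvb: "Q vb (\<epsilon> vb) (a vb)" using a vb(1) D(1) by blast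
    have em: "emin \<le> \<epsilon> vb" using emin_le[OF vb(1)] .
    have dxy: "dist y x < \<delta>" using x by simp
    have h1: "norm (x - y) < \<epsilon> vb" using dxy em by (simp add: \<delta>_def dist_norm norm_minus_commute)
    have h2: "norm (v - vb) < \<epsilon> vb" using vb(2) by (simp add: dist_norm norm_minus_commute)
    have "dist (f x) (f y) < emin" using \<delta>1(2) dxy by (simp add: \<delta>_def dist_commute)
    hence h3: "f x < f y + \<epsilon> vb" using em unfolding dist_real_def by linarith
    show "\<exists>v. \<forall>x'\<in>ball y \<delta>. f x' \<ge> f x + inner v (x' - x) - A / 2 * (norm (x' - x))\<^sup>2"
    proof (intro exI[of _ v] ballI)
      fix x' assume x': "x' \<in> ball y \<delta>"
      have h4: "x' \<in> ball y (\<epsilon> vb)" using x' em by (simp add: \<delta>_def)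
      have i: "f x' \<ge> f x + inner v (x' - x) - a vb / 2 * (norm (x' - x))\<^sup>2"
        using Qvb h1 h2 h3 h4 v unfolding Q_def by blast
      have "a vb / 2 * (norm (x' - x))\<^sup>2 \<le> A / 2 * (norm (x' - x))\<^sup>2"
        by (rule mult_right_mono) (use aA[OF vb(1)] in auto)
      thus "f x' \<ge> f x + inner v (x' - x) - A / 2 * (norm (x' - x))\<^sup>2" using i by linarith
    qed
  qed
  show ?thesis using main dpos A0 by blast
qed


theorem lemma1:
  fixes f :: "'a::euclidean_space \<Rightarrow> real" and x0 :: 'a
  assumes "locally_lipschitz f"
    and "bdd_below (range f)"
    and "bounded {x. f x \<le> f x0}"
    and "\<forall>y\<in>{x. f x \<le> f x0}. prox_regular_at f y"
  shows "\<exists>abar\<ge>0. \<forall>a\<ge>abar. \<forall>x y. y \<in> {z. f z \<le> f x0} \<longrightarrow>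
           (\<exists>e>0. convex_on (ball y e) (\<lambda>z. f z + a / 2 * (norm (z - x))\<^sup>2))"
proof -
  define S where "S = {x. f x \<le> f x0}"
  have contf: "continuous_on UNIV f"
    using ll_isCont[OF assms(1)] by (intro continuous_at_imp_continuous_on) blast
  have "closed S" unfolding S_def by (rule closed_Collect_le[OF contf continuous_on_const])
  hence cS: "compact S" using assms(3) unfolding S_def compact_eq_bounded_closed by blast
  have loc: "\<forall>y\<in>S. \<exists>d. d > 0 \<and> (\<exists>A. A \<ge> 0 \<and> (\<forall>a\<ge>A. \<forall>c. convex_on (ball y d) (\<lambda>z. f z + a / 2 * (norm (z - c))\<^sup>2)))"
  proof
    fix y assume "y \<in> S"
    hence "prox_regular_at f y" using assms(4) unfolding S_def by blast
    then obtain d A where dA: "d > 0" "A \<ge> 0"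
      "\<forall>x\<in>ball y d. \<exists>v. \<forall>x'\<in>ball y d. f x' \<ge> f x + inner v (x' - x) - A / 2 * (norm (x' - x))\<^sup>2"
      using local_conv[OF assms(1)] by blast
    have "\<forall>a\<ge>A. \<forall>c. convex_on (ball y d) (\<lambda>z. f z + a / 2 * (norm (z - c))\<^sup>2)"
      using conv_from_support[OF dA(3)] by blast
    thus "\<exists>d. d > 0 \<and> (\<exists>A. A \<ge> 0 \<and> (\<forall>a\<ge>A. \<forall>c. convex_on (ball y d) (\<lambda>z. f z + a / 2 * (norm (z - c))\<^sup>2)))"
      using dA by blast
  qed
  obtain \<delta> where \<delta>: "\<forall>y\<in>S. \<delta> y > 0 \<and> (\<exists>A. A \<ge> 0 \<and> (\<forall>a\<ge>A. \<forall>c. convex_on (ball y (\<delta> y)) (\<lambda>z. f z + a / 2 * (norm (z - c))\<^sup>2)))"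
    using bchoice[OF loc] by (elim exE)
  have hA: "\<forall>y\<in>S. \<exists>A. A \<ge> 0 \<and> (\<forall>a\<ge>A. \<forall>c. convex_on (ball y (\<delta> y)) (\<lambda>z. f z + a / 2 * (norm (z - c))\<^sup>2))"
    using \<delta> by blast
  obtain A where A: "\<forall>y\<in>S. A y \<ge> 0 \<and> (\<forall>a\<ge>A y. \<forall>c. convex_on (ball y (\<delta> y)) (\<lambda>z. f z + a / 2 * (norm (z - c))\<^sup>2))"
    using bchoice[OF hA] by (elim exE)
  have "S \<subseteq> (\<Union>y\<in>S. ball y (\<delta> y))" using \<delta> by auto
  then obtain C where C: "C \<subseteq> S" "finite C" "S \<subseteq> (\<Union>y\<in>C. ball y (\<delta> y))"
    using compactE_image[of S S "\<lambda>y. ball y (\<delta> y)"] cS by blast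
  define abar where "abar = (\<Sum>y\<in>C. A y)"
  have ab0: "abar \<ge> 0" unfolding abar_def using A C(1) by (intro sum_nonneg) auto
  have Aab: "\<And>y. y \<in> C \<Longrightarrow> A y \<le> abar" unfolding abar_def
    using A C by (intro member_le_sum) auto
  have "\<forall>a\<ge>abar. \<forall>x y. y \<in> {z. f z \<le> f x0} \<longrightarrow>
           (\<exists>e>0. convex_on (ball y e) (\<lambda>z. f z + a / 2 * (norm (z - x))\<^sup>2))"
  proof (intro allI impI)
    fix a x y assume a: "a \<ge> abar" and y: "y \<in> {z. f z \<le> f x0}"
    hence "y \<in> S" unfolding S_def by simp
    then obtain yi where yi: "yi \<in> C" "y \<in> ball yi (\<delta> yi)" using C(3) by blast
    define e where "e = \<delta> yi - dist yi y"
    have e: "e > 0" using yi(2) by (simp add: e_def)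
    have sub: "ball y e \<subseteq> ball yi (\<delta> yi)"
    proof
      fix z assume "z \<in> ball y e"
      hence "dist y z < e" by simp
      moreover have "dist yi z \<le> dist yi y + dist y z" by (rule dist_triangle)
      ultimately show "z \<in> ball yi (\<delta> yi)" unfolding e_def by simp
    qed
    have yiS: "yi \<in> S" using yi(1) C(1) by blast
    have "a \<ge> A yi" using Aab[OF yi(1)] a by linarith
    hence "convex_on (ball yi (\<delta> yi)) (\<lambda>z. f z + a / 2 * (norm (z - x))\<^sup>2)" using A yiS by blast
    hence "convex_on (ball y e) (\<lambda>z. f z + a / 2 * (norm (z - x))\<^sup>2)"
      by (rule convex_on_subset[OF _ sub convex_ball])
    thus "\<exists>e>0. convex_on (ball y e) (\<lambda>z. f z + a / 2 * (norm (z - x))\<^sup>2)" using e by blast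
  qed
  thus ?thesis using ab0 by blast
qed


end
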